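(* Let $\mathbf P=(P,\leq,{}',0,1)$ be a bounded poset which is the horizontal sum of pseudo-orthomodular posets $\mathbf P_{\alpha}=(P_{\alpha},\leq_{\alpha},{}'_{\alpha},0,1)$, $\alpha\in\Lambda$ (with $'$ acting on each summand as $'_\alpha$). Then $\mathbf P$ is a pseudo-orthomodular poset.
   Context: For $M\subseteq P$, $U(M)=\{x\in P\mid y\le x \text{ for all } y\in M\}$ and $L(M)=\{x\in P\mid x\le y\text{ for all }y\in M\}$; write $U(a,b)=U(\{a,b\})$, $L(a,b)=L(\{a,b\})$, and $LU(\cdot)=L(U(\cdot))$ etc. A poset with complementation is a bounded poset $(P,\le,{}',0,1)$ where $'$ is an antitone involution ($x\le y\Rightarrow y'\le x'$, $x''=x$) satisfying $L(x,x')=\{0\}$ and $U(x,x')=\{1\}$ for all $x$. It is pseudo-orthomodular if $L(U(L(x,y),y'),y)=L(x,y)$ for all $x,y\in P$ (equivalently $U(L(U(x,y),y'),y)=U(x,y)$). The horizontal sum of a family of bounded posets is obtained from their disjoint union by identifying all bottom elements into $0$ and all top elements into $1$; elements of different summands other than $0,1$ are incomparable. *)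

theory Defs
  imports Main
begin

definition upper :: "'a set \<Rightarrow> ('a \<Rightarrow> 'a \<Rightarrow> bool) \<Rightarrow> 'a set \<Rightarrow> 'a set" where
  "upper P le M = {x \<in> P. \<forall>y\<in>M. le y x}"

definition lower :: "'a set \<Rightarrow> ('a \<Rightarrow> 'a \<Rightarrow> bool) \<Rightarrow> 'a set \<Rightarrow> 'a set" where
  "lower P le M = {x \<in> P. \<forall>y\<in>M. le x y}"

definition poset_on :: "'a set \<Rightarrow> ('a \<Rightarrow> 'a \<Rightarrow> bool) \<Rightarrow> bool" where
  "poset_on P le \<longleftrightarrow>
     (\<forall>x\<in>P. le x x) \<and>
     (\<forall>x\<in>P. \<forall>y\<in>P. le x y \<and> le y x \<longrightarrow> x = y) \<and>
     (\<forall>x\<in>P. \<forall>y\<in>P. \<forall>w\<in>P. le x y \<and> le y w \<longrightarrow> le x w)"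

definition bounded_poset :: "'a set \<Rightarrow> ('a \<Rightarrow> 'a \<Rightarrow> bool) \<Rightarrow> 'a \<Rightarrow> 'a \<Rightarrow> bool" where
  "bounded_poset P le z t \<longleftrightarrow> poset_on P le \<and> z \<in> P \<and> t \<in> P \<and>
     (\<forall>x\<in>P. le z x \<and> le x t)"

definition poset_with_complementation ::
  "'a set \<Rightarrow> ('a \<Rightarrow> 'a \<Rightarrow> bool) \<Rightarrow> ('a \<Rightarrow> 'a) \<Rightarrow> 'a \<Rightarrow> 'a \<Rightarrow> bool" where
  "poset_with_complementation P le c z t \<longleftrightarrow> bounded_poset P le z t \<and>
     (\<forall>x\<in>P. c x \<in> P) \<and>
     (\<forall>x\<in>P. \<forall>y\<in>P. le x y \<longrightarrow> le (c y) (c x)) \<and>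
     (\<forall>x\<in>P. c (c x) = x) \<and>
     (\<forall>x\<in>P. lower P le {x, c x} = {z}) \<and>
     (\<forall>x\<in>P. upper P le {x, c x} = {t})"

definition pseudo_orthomodular ::
  "'a set \<Rightarrow> ('a \<Rightarrow> 'a \<Rightarrow> bool) \<Rightarrow> ('a \<Rightarrow> 'a) \<Rightarrow> 'a \<Rightarrow> 'a \<Rightarrow> bool" where
  "pseudo_orthomodular P le c z t \<longleftrightarrow> poset_with_complementation P le c z t \<and>
     (\<forall>x\<in>P. \<forall>y\<in>P.
        lower P le (upper P le (lower P le {x, y} \<union> {c y}) \<union> {y}) = lower P le {x, y})"

text \<open>Horizontal sum of a family (P_\<alpha>, le_\<alpha>, c_\<alpha>, z_\<alpha>, o_\<alpha>), \<alpha> \<in> \<Lambda>: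
  the common bottom is HBot, the common top is HTop, and every other element of
  summand \<alpha> is tagged with \<alpha>.\<close>
datatype ('i, 'a) hsum = HBot | HTop | HElem 'i 'a

definition hs_carrier :: "'i set \<Rightarrow> ('i \<Rightarrow> 'a set) \<Rightarrow> ('i \<Rightarrow> 'a) \<Rightarrow> ('i \<Rightarrow> 'a) \<Rightarrow> ('i, 'a) hsum set" where
  "hs_carrier \<Lambda> P z t = {HBot, HTop} \<union>
     {HElem \<alpha> x | \<alpha> x. \<alpha> \<in> \<Lambda> \<and> x \<in> P \<alpha> \<and> x \<noteq> z \<alpha> \<and> x \<noteq> t \<alpha>}"

fun hs_le :: "('i \<Rightarrow> 'a \<Rightarrow> 'a \<Rightarrow> bool) \<Rightarrow> ('i, 'a) hsum \<Rightarrow> ('i, 'a) hsum \<Rightarrow> bool" where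
  "hs_le le HBot y = True"
| "hs_le le x HTop = True"
| "hs_le le (HElem \<alpha> x) (HElem \<beta> y) = (\<alpha> = \<beta> \<and> le \<alpha> x y)"
| "hs_le le _ _ = False"

fun hs_comp :: "('i \<Rightarrow> 'a \<Rightarrow> 'a) \<Rightarrow> ('i, 'a) hsum \<Rightarrow> ('i, 'a) hsum" where
  "hs_comp c HBot = HTop"
| "hs_comp c HTop = HBot"
| "hs_comp c (HElem \<alpha> x) = HElem \<alpha> (c \<alpha> x)"

end

theory Submission
  imports Defs
begin

lemma pom_facts:
  assumes "pseudo_orthomodular Q r k a tt"
  shows "\<forall>x\<in>Q. r x x"
    "\<forall>x\<in>Q. \<forall>y\<in>Q. r x y \<and> r y x \<longrightarrow> x = y"
    "\<forall>x\<in>Q. \<forall>y\<in>Q. \<forall>w\<in>Q. r x y \<and> r y w \<longrightarrow> r x w"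
    "a \<in> Q" "tt \<in> Q" "\<forall>x\<in>Q. r a x \<and> r x tt"
    "\<forall>x\<in>Q. k x \<in> Q"
    "\<forall>x\<in>Q. \<forall>y\<in>Q. r x y \<longrightarrow> r (k y) (k x)"
    "\<forall>x\<in>Q. k (k x) = x"
    "\<forall>x\<in>Q. lower Q r {x, k x} = {a}"
    "\<forall>x\<in>Q. upper Q r {x, k x} = {tt}"
    "\<forall>x\<in>Q. \<forall>y\<in>Q.
        lower Q r (upper Q r (lower Q r {x, y} \<union> {k y}) \<union> {y}) = lower Q r {x, y}"
  using assms unfolding pseudo_orthomodular_def poset_with_complementation_def
    bounded_poset_def poset_on_def apply - apply (elim conjE, assumption)+ done

lemma pom_ka:
  assumes "pseudo_orthomodular Q r k a tt"
  shows "k a = tt" "k tt = a"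
proof -
  note f = pom_facts[OF assms]
  have ka1: "k a \<in> Q" using f(7) f(4) by blast
  have "r a (k a)" using f(6) ka1 by blast
  moreover have "r (k a) (k a)" using f(1) ka1 by blast
  ultimately have "k a \<in> upper Q r {a, k a}" using ka1 unfolding upper_def by simp
  moreover have "upper Q r {a, k a} = {tt}" using f(11) f(4) by blast
  ultimately show ka: "k a = tt" by simp
  have "k (k a) = a" using f(9) f(4) by blast
  then show "k tt = a" using ka by simp
qed

lemma pom_nb:
  assumes "pseudo_orthomodular Q r k a tt" "x \<in> Q" "x \<noteq> a" "x \<noteq> tt"
  shows "k x \<noteq> a" "k x \<noteq> tt"
proof -
  have kk: "k (k x) = x" using pom_facts(9)[OF assms(1)] assms(2) by blast
  show "k x \<noteq> a"
  proof
    assume "k x = a" then have "k (k x) = tt" using pom_ka[OF assms(1)] by simp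
    then show False using kk assms(4) by simp
  qed
  show "k x \<noteq> tt"
  proof
    assume "k x = tt" then have "k (k x) = a" using pom_ka[OF assms(1)] by simp
    then show False using kk assms(3) by simp
  qed
qed

definition emb :: "'i \<Rightarrow> ('i \<Rightarrow> 'a) \<Rightarrow> ('i \<Rightarrow> 'a) \<Rightarrow> 'a \<Rightarrow> ('i,'a) hsum" where
  "emb \<beta> z t x = (if x = z \<beta> then HBot else if x = t \<beta> then HTop else HElem \<beta> x)"


lemma hs_le_bot[simp]: "hs_le le w HBot = (w = HBot)"
  by (cases w) simp_all

lemma hs_le_top[simp]: "hs_le le HTop w = (w = HTop)"
  by (cases w) simp_all

lemma hs_le_top2[simp]: "hs_le le w HTop"
  by (cases w) simp_all

lemma hs_elem_in: "HElem \<alpha> x \<in> hs_carrier \<Lambda> P z t \<longleftrightarrow>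
   \<alpha> \<in> \<Lambda> \<and> x \<in> P \<alpha> \<and> x \<noteq> z \<alpha> \<and> x \<noteq> t \<alpha>"
  unfolding hs_carrier_def by auto

lemma hs_bot_in[simp]: "HBot \<in> hs_carrier \<Lambda> P z t"
  and hs_top_in[simp]: "HTop \<in> hs_carrier \<Lambda> P z t"
  unfolding hs_carrier_def by auto

context
  fixes \<Lambda> :: "'i set"
    and P :: "'i \<Rightarrow> 'a set"
    and le :: "'i \<Rightarrow> 'a \<Rightarrow> 'a \<Rightarrow> bool"
    and c :: "'i \<Rightarrow> 'a \<Rightarrow> 'a"
    and z t :: "'i \<Rightarrow> 'a"
  assumes A: "\<forall>\<alpha>\<in>\<Lambda>. pseudo_orthomodular (P \<alpha>) (le \<alpha>) (c \<alpha>) (z \<alpha>) (t \<alpha>)"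
begin

lemma pom: "\<alpha> \<in> \<Lambda> \<Longrightarrow> pseudo_orthomodular (P \<alpha>) (le \<alpha>) (c \<alpha>) (z \<alpha>) (t \<alpha>)"
  using A by blast

lemma zt_ne: assumes "\<beta> \<in> \<Lambda>" "b \<in> P \<beta>" "b \<noteq> z \<beta>" "b \<noteq> t \<beta>"
  shows "z \<beta> \<noteq> t \<beta>"
proof
  assume e: "z \<beta> = t \<beta>"
  note f = pom_facts[OF pom[OF assms(1)]]
  have "le \<beta> (z \<beta>) b" "le \<beta> b (t \<beta>)" using f(6) assms(2) by blast+
  then have "b = z \<beta>" using f(2) f(4) assms(2) e by metis
  then show False using assms(3) by simp
qed

lemma emb_in: assumes "\<beta> \<in> \<Lambda>" "x \<in> P \<beta>"
  shows "emb \<beta> z t x \<in> hs_carrier \<Lambda> P z t"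
  using assms unfolding emb_def by (simp add: hs_elem_in)

lemma emb_le: assumes "\<beta> \<in> \<Lambda>" "x \<in> P \<beta>" "y \<in> P \<beta>"
  shows "hs_le le (emb \<beta> z t x) (emb \<beta> z t y) = le \<beta> x y"
proof -
  note f = pom_facts[OF pom[OF assms(1)]]
  have zx: "le \<beta> (z \<beta>) y" "le \<beta> x (t \<beta>)" using f(6) assms by blast+
  have ax: "\<And>u. u \<in> P \<beta> \<Longrightarrow> le \<beta> (t \<beta>) u \<Longrightarrow> u = t \<beta>"
    using f(2) f(5) f(6) by blast
  have az: "\<And>u. u \<in> P \<beta> \<Longrightarrow> le \<beta> u (z \<beta>) \<Longrightarrow> u = z \<beta>"
    using f(2) f(4) f(6) by blast
  show ?thesis
    unfolding emb_def using zx ax[OF assms(3)] az[OF assms(2)]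
    by auto
qed

lemma emb_surj: assumes "\<beta> \<in> \<Lambda>" "w \<in> hs_carrier \<Lambda> P z t"
    "hs_le le w (HElem \<beta> b) \<or> hs_le le (HElem \<beta> b) w" "z \<beta> \<noteq> t \<beta>"
  shows "\<exists>x\<in>P \<beta>. w = emb \<beta> z t x"
proof (cases w)
  case HBot
  then show ?thesis using pom_facts(4)[OF pom[OF assms(1)]] unfolding emb_def
    by (intro bexI[of _ "z \<beta>"]) simp_all
next
  case HTop
  then show ?thesis using pom_facts(5)[OF pom[OF assms(1)]] assms(4) unfolding emb_def
    by (intro bexI[of _ "t \<beta>"]) simp_all
next
  case (HElem \<gamma> a)
  then show ?thesis using assms(2,3) unfolding emb_def by (auto simp: hs_elem_in)
qed

lemma lower_transfer:
  assumes "\<beta> \<in> \<Lambda>" "M \<subseteq> P \<beta>" "b \<in> M" "b \<noteq> z \<beta>" "b \<noteq> t \<beta>"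
  shows "lower (hs_carrier \<Lambda> P z t) (hs_le le) (emb \<beta> z t ` M)
       = emb \<beta> z t ` lower (P \<beta>) (le \<beta>) M"
proof
  have bP: "b \<in> P \<beta>" using assms by blast
  have ne: "z \<beta> \<noteq> t \<beta>" using zt_ne[OF assms(1) bP assms(4,5)] .
  have eb: "emb \<beta> z t b = HElem \<beta> b" using assms(4,5) unfolding emb_def by simp
  show "lower (hs_carrier \<Lambda> P z t) (hs_le le) (emb \<beta> z t ` M)
       \<subseteq> emb \<beta> z t ` lower (P \<beta>) (le \<beta>) M"
  proof
    fix w assume w: "w \<in> lower (hs_carrier \<Lambda> P z t) (hs_le le) (emb \<beta> z t ` M)"
    then have wS: "w \<in> hs_carrier \<Lambda> P z t" and wl: "\<forall>m\<in>M. hs_le le w (emb \<beta> z t m)"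
      unfolding lower_def by auto
    have "hs_le le w (HElem \<beta> b)" using wl assms(3) eb by metis
    then obtain x where x: "x \<in> P \<beta>" "w = emb \<beta> z t x"
      using emb_surj[OF assms(1) wS _ ne] by blast
    have "\<forall>m\<in>M. le \<beta> x m" using wl x emb_le[OF assms(1)] assms(2) by auto
    then have "x \<in> lower (P \<beta>) (le \<beta>) M" using x unfolding lower_def by auto
    then show "w \<in> emb \<beta> z t ` lower (P \<beta>) (le \<beta>) M" using x by blast
  qed
  show "emb \<beta> z t ` lower (P \<beta>) (le \<beta>) M
     \<subseteq> lower (hs_carrier \<Lambda> P z t) (hs_le le) (emb \<beta> z t ` M)"
  proof
    fix w assume "w \<in> emb \<beta> z t ` lower (P \<beta>) (le \<beta>) M"
    then obtain x where x: "x \<in> P \<beta>" "\<forall>m\<in>M. le \<beta> x m" "w = emb \<beta> z t x"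
      unfolding lower_def by auto
    then show "w \<in> lower (hs_carrier \<Lambda> P z t) (hs_le le) (emb \<beta> z t ` M)"
      unfolding lower_def using emb_in[OF assms(1)] emb_le[OF assms(1)] assms(2) by auto
  qed
qed

lemma upper_transfer:
  assumes "\<beta> \<in> \<Lambda>" "M \<subseteq> P \<beta>" "b \<in> M" "b \<noteq> z \<beta>" "b \<noteq> t \<beta>"
  shows "upper (hs_carrier \<Lambda> P z t) (hs_le le) (emb \<beta> z t ` M)
       = emb \<beta> z t ` upper (P \<beta>) (le \<beta>) M"
proof
  have bP: "b \<in> P \<beta>" using assms by blast
  have ne: "z \<beta> \<noteq> t \<beta>" using zt_ne[OF assms(1) bP assms(4,5)] .
  have eb: "emb \<beta> z t b = HElem \<beta> b" using assms(4,5) unfolding emb_def by simp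
  show "upper (hs_carrier \<Lambda> P z t) (hs_le le) (emb \<beta> z t ` M)
       \<subseteq> emb \<beta> z t ` upper (P \<beta>) (le \<beta>) M"
  proof
    fix w assume w: "w \<in> upper (hs_carrier \<Lambda> P z t) (hs_le le) (emb \<beta> z t ` M)"
    then have wS: "w \<in> hs_carrier \<Lambda> P z t" and wl: "\<forall>m\<in>M. hs_le le (emb \<beta> z t m) w"
      unfolding upper_def by auto
    have "hs_le le (HElem \<beta> b) w" using wl assms(3) eb by metis
    then obtain x where x: "x \<in> P \<beta>" "w = emb \<beta> z t x"
      using emb_surj[OF assms(1) wS _ ne] by blast
    have "\<forall>m\<in>M. le \<beta> m x" using wl x emb_le[OF assms(1)] assms(2) by auto
    then have "x \<in> upper (P \<beta>) (le \<beta>) M" using x unfolding upper_def by auto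
    then show "w \<in> emb \<beta> z t ` upper (P \<beta>) (le \<beta>) M" using x by blast
  qed
  show "emb \<beta> z t ` upper (P \<beta>) (le \<beta>) M
     \<subseteq> upper (hs_carrier \<Lambda> P z t) (hs_le le) (emb \<beta> z t ` M)"
  proof
    fix w assume "w \<in> emb \<beta> z t ` upper (P \<beta>) (le \<beta>) M"
    then obtain x where x: "x \<in> P \<beta>" "\<forall>m\<in>M. le \<beta> m x" "w = emb \<beta> z t x"
      unfolding upper_def by auto
    then show "w \<in> upper (hs_carrier \<Lambda> P z t) (hs_le le) (emb \<beta> z t ` M)"
      unfolding upper_def using emb_in[OF assms(1)] emb_le[OF assms(1)] assms(2) by auto
  qed
qed


abbreviation "SS \<equiv> hs_carrier \<Lambda> P z t"
abbreviation "RR \<equiv> hs_le le"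
abbreviation "CC \<equiv> hs_comp c"

lemma hs_refl: "x \<in> SS \<Longrightarrow> RR x x"
  by (cases x) (auto simp: hs_elem_in dest!: pom intro: pom_facts(1)[rule_format])

lemma hs_antisym: "x \<in> SS \<Longrightarrow> y \<in> SS \<Longrightarrow> RR x y \<Longrightarrow> RR y x \<Longrightarrow> x = y"
  by (cases x; cases y) (auto simp: hs_elem_in dest!: pom intro: pom_facts(2)[rule_format])

lemma hs_trans: "x \<in> SS \<Longrightarrow> y \<in> SS \<Longrightarrow> w \<in> SS \<Longrightarrow> RR x y \<Longrightarrow> RR y w \<Longrightarrow> RR x w"
proof (cases x; cases y; cases w)
  fix \<alpha> a \<beta> b \<gamma> d
  assume "x \<in> SS" "y \<in> SS" "w \<in> SS" "RR x y" "RR y w"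
    "x = HElem \<alpha> a" "y = HElem \<beta> b" "w = HElem \<gamma> d"
  then show "RR x w" using pom_facts(3)[OF pom] by (auto simp: hs_elem_in)
qed auto

lemma hs_comp_in: "x \<in> SS \<Longrightarrow> CC x \<in> SS"
proof (cases x)
  case (HElem \<alpha> a)
  assume "x \<in> SS"
  then have h: "\<alpha> \<in> \<Lambda>" "a \<in> P \<alpha>" "a \<noteq> z \<alpha>" "a \<noteq> t \<alpha>" using HElem by (auto simp: hs_elem_in)
  show ?thesis using HElem h pom_nb[OF pom[OF h(1)] h(2-4)] pom_facts(7)[OF pom[OF h(1)]]
    by (simp add: hs_elem_in)
qed simp_all

lemma hs_anti: "x \<in> SS \<Longrightarrow> y \<in> SS \<Longrightarrow> RR x y \<Longrightarrow> RR (CC y) (CC x)"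
proof (cases x; cases y)
  fix \<alpha> a \<beta> b
  assume "x \<in> SS" "y \<in> SS" "RR x y" "x = HElem \<alpha> a" "y = HElem \<beta> b"
  then show "RR (CC y) (CC x)" using pom_facts(8)[OF pom] by (auto simp: hs_elem_in)
qed auto

lemma hs_inv: "x \<in> SS \<Longrightarrow> CC (CC x) = x"
  by (cases x) (auto simp: hs_elem_in dest!: pom intro: pom_facts(9)[rule_format])

lemma emb_elem: "b \<noteq> z \<beta> \<Longrightarrow> b \<noteq> t \<beta> \<Longrightarrow> emb \<beta> z t b = HElem \<beta> b"
  unfolding emb_def by simp

lemma hs_compl: assumes "x \<in> SS"
  shows "lower SS RR {x, CC x} = {HBot}" "upper SS RR {x, CC x} = {HTop}"
proof -
  have "lower SS RR {x, CC x} = {HBot} \<and> upper SS RR {x, CC x} = {HTop}"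
  proof (cases x)
    case HBot
    then show ?thesis unfolding lower_def upper_def by auto
  next
    case HTop
    then show ?thesis unfolding lower_def upper_def by auto
  next
    case (HElem \<alpha> a)
    then have h: "\<alpha> \<in> \<Lambda>" "a \<in> P \<alpha>" "a \<noteq> z \<alpha>" "a \<noteq> t \<alpha>" using assms by (auto simp: hs_elem_in)
    note f = pom_facts[OF pom[OF h(1)]]
    have ne: "z \<alpha> \<noteq> t \<alpha>" using zt_ne h by blast
    have ca: "c \<alpha> a \<noteq> z \<alpha>" "c \<alpha> a \<noteq> t \<alpha>" using pom_nb[OF pom[OF h(1)] h(2-4)] by auto
    have eq: "{x, CC x} = emb \<alpha> z t ` {a, c \<alpha> a}"
      using HElem h ca by (simp add: emb_elem)
    have sub: "{a, c \<alpha> a} \<subseteq> P \<alpha>" using h f(7) by blast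
    have "lower SS RR (emb \<alpha> z t ` {a, c \<alpha> a}) = emb \<alpha> z t ` lower (P \<alpha>) (le \<alpha>) {a, c \<alpha> a}"
      by (rule lower_transfer[OF h(1) sub _ h(3,4)]) simp
    also have "lower (P \<alpha>) (le \<alpha>) {a, c \<alpha> a} = {z \<alpha>}" using f(10) h(2) by blast
    finally have 1: "lower SS RR {x, CC x} = emb \<alpha> z t ` {z \<alpha>}" unfolding eq .
    have "upper SS RR (emb \<alpha> z t ` {a, c \<alpha> a}) = emb \<alpha> z t ` upper (P \<alpha>) (le \<alpha>) {a, c \<alpha> a}"
      by (rule upper_transfer[OF h(1) sub _ h(3,4)]) simp
    also have "upper (P \<alpha>) (le \<alpha>) {a, c \<alpha> a} = {t \<alpha>}" using f(11) h(2) by blast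
    finally have 2: "upper SS RR {x, CC x} = emb \<alpha> z t ` {t \<alpha>}" unfolding eq .
    show ?thesis using 1 2 ne unfolding emb_def by simp
  qed
  then show "lower SS RR {x, CC x} = {HBot}" "upper SS RR {x, CC x} = {HTop}" by auto
qed

lemma hs_pso: assumes x: "x \<in> SS" and y: "y \<in> SS"
  shows "lower SS RR (upper SS RR (lower SS RR {x, y} \<union> {CC y}) \<union> {y}) = lower SS RR {x, y}"
proof (cases y)
  case HBot
  have l: "lower SS RR {x, y} = {HBot}" using HBot unfolding lower_def by auto
  have u: "upper SS RR ({HBot} \<union> {CC y}) = {HTop}" using HBot unfolding upper_def by auto
  show ?thesis unfolding l u using HBot unfolding lower_def by auto
next
  case HTop
  have l: "lower SS RR {x, y} = lower SS RR {x}" using HTop unfolding lower_def by auto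
  show ?thesis unfolding l
  proof
    show "lower SS RR {x} \<subseteq> lower SS RR (upper SS RR (lower SS RR {x} \<union> {CC y}) \<union> {y})"
      using HTop unfolding lower_def upper_def by auto
    have "x \<in> upper SS RR (lower SS RR {x} \<union> {CC y})"
      using HTop x unfolding lower_def upper_def by auto
    then show "lower SS RR (upper SS RR (lower SS RR {x} \<union> {CC y}) \<union> {y}) \<subseteq> lower SS RR {x}"
      unfolding lower_def by auto
  qed
next
  case (HElem \<beta> b)
  then have h: "\<beta> \<in> \<Lambda>" "b \<in> P \<beta>" "b \<noteq> z \<beta>" "b \<noteq> t \<beta>" using y by (auto simp: hs_elem_in)
  note f = pom_facts[OF pom[OF h(1)]]
  have ne: "z \<beta> \<noteq> t \<beta>" using zt_ne h by blast
  have cb: "c \<beta> b \<noteq> z \<beta>" "c \<beta> b \<noteq> t \<beta>" "c \<beta> b \<in> P \<beta>"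
    using pom_nb[OF pom[OF h(1)] h(2-4)] f(7) h(2) by auto
  have eb: "emb \<beta> z t b = y" using HElem h emb_elem by simp
  have ecb: "emb \<beta> z t (c \<beta> b) = CC y" using HElem cb emb_elem by simp
  obtain x' where x': "x' \<in> P \<beta>" "lower SS RR {x, y} = lower SS RR {emb \<beta> z t x', y}"
  proof (cases "\<exists>a\<in>P \<beta>. x = emb \<beta> z t a")
    case True
    then show ?thesis using that by blast
  next
    case False
    then obtain \<gamma> a where xg: "x = HElem \<gamma> a" "\<gamma> \<noteq> \<beta>"
      using x f(4,5) ne unfolding emb_def
      by (cases x) (auto simp: hs_elem_in split: if_splits)
    have "lower SS RR {x, y} = {HBot}" using xg HElem unfolding lower_def
      by (auto elim: hs_le.elims)
    moreover have "lower SS RR {emb \<beta> z t (z \<beta>), y} = {HBot}" unfolding lower_def emb_def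
      by auto
    ultimately show ?thesis using that f(4) by metis
  qed
  define Lb where "Lb = lower (P \<beta>) (le \<beta>) {x', b}"
  define Ub where "Ub = upper (P \<beta>) (le \<beta>) (Lb \<union> {c \<beta> b})"
  have s1: "{x', b} \<subseteq> P \<beta>" using x' h by blast
  have L1: "lower SS RR {x, y} = emb \<beta> z t ` Lb"
    unfolding x'(2) Lb_def using lower_transfer[OF h(1) s1 _ h(3,4)] eb by simp
  have s2: "Lb \<union> {c \<beta> b} \<subseteq> P \<beta>" unfolding Lb_def lower_def using cb by auto
  have U1: "upper SS RR (lower SS RR {x, y} \<union> {CC y}) = emb \<beta> z t ` Ub"
    unfolding L1 Ub_def using upper_transfer[OF h(1) s2 _ cb(1,2)] ecb by simp
  have s3: "Ub \<union> {b} \<subseteq> P \<beta>" unfolding Ub_def upper_def using h by auto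
  have L2: "lower SS RR (upper SS RR (lower SS RR {x, y} \<union> {CC y}) \<union> {y})
      = emb \<beta> z t ` lower (P \<beta>) (le \<beta>) (Ub \<union> {b})"
    unfolding U1 using lower_transfer[OF h(1) s3 _ h(3,4)] eb by simp
  have "lower (P \<beta>) (le \<beta>) (Ub \<union> {b}) = Lb"
    unfolding Ub_def Lb_def using f(12) x'(1) h(2) by blast
  then show ?thesis using L2 L1 by simp
qed

end

theorem proposition4:
  fixes \<Lambda> :: "'i set"
    and P :: "'i \<Rightarrow> 'a set"
    and le :: "'i \<Rightarrow> 'a \<Rightarrow> 'a \<Rightarrow> bool"
    and c :: "'i \<Rightarrow> 'a \<Rightarrow> 'a"
    and z t :: "'i \<Rightarrow> 'a"
  assumes "\<forall>\<alpha>\<in>\<Lambda>. pseudo_orthomodular (P \<alpha>) (le \<alpha>) (c \<alpha>) (z \<alpha>) (t \<alpha>)"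
  shows "pseudo_orthomodular (hs_carrier \<Lambda> P z t) (hs_le le) (hs_comp c) HBot HTop"
proof -
  note D = pseudo_orthomodular_def poset_with_complementation_def bounded_poset_def poset_on_def
  have p: "poset_on (hs_carrier \<Lambda> P z t) (hs_le le)"
    unfolding poset_on_def using hs_refl[OF assms] hs_antisym[OF assms] hs_trans[OF assms]
    by blast
  have b: "bounded_poset (hs_carrier \<Lambda> P z t) (hs_le le) HBot HTop"
    unfolding bounded_poset_def using p by simp
  have c: "poset_with_complementation (hs_carrier \<Lambda> P z t) (hs_le le) (hs_comp c) HBot HTop"
    unfolding poset_with_complementation_def
    using b hs_comp_in[OF assms] hs_anti[OF assms] hs_inv[OF assms] hs_compl[OF assms]
    by blast
  show ?thesis unfolding pseudo_orthomodular_def using c hs_pso[OF assms] by blast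
qed

end
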